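(* Let $S\subset M$ be a saturated affine semigroup with $w(S)=S$ for all $w\in W$, and let $u\in D\cap S$. Writing $\Psi(\chi^u)=\sum_{v\in D\cap\Lambda}a_v\underline{\chi}^v$, every $v$ with $a_v\ne 0$ lies in $S$.
   Context: Setting: $V$ is a finite-dimensional real vector space with positive definite symmetric bilinear form $\langle\,,\rangle$; $M\subset V$ is a lattice; $W\subset\mathrm{GL}(V)$ is a finite group generated by reflections $s_\alpha(v)=v-2\frac{\langle v,\alpha\rangle}{\langle\alpha,\alpha\rangle}\alpha$ and preserving $M$; $\Delta=\{\alpha_1,\dots,\alpha_r\}\subset M$ is a simple system for $W$ (a linearly independent subset of a root system for $W$, spanning the same subspace, such that every root is a real combination of $\Delta$ with coefficients of one sign) chosen so that $M\subset\Lambda$, where $\Lambda=\{v\in V:2\frac{\langle v,\alpha_i\rangle}{\langle\alpha_i,\alpha_i\rangle}\in\mathbb{Z}\ \forall i\}$ is the weight group (such $\Delta$ exists, and $W$ preserves $\Lambda$). Let $Z=\bigcap_i\alpha_i^\perp$ and let $\lambda_1,\dots,\lambda_r\in Z^\perp$ be the fundamental weights, defined by $2\frac{\langle\lambda_i,\alpha_j\rangle}{\langle\alpha_j,\alpha_j\rangle}=\delta_{ij}$. Then $\Lambda=Z\oplus\Lambda_\circ$ with $\Lambda_\circ=\mathbb{Z}\langle\lambda_1,\dots,\lambda_r\rangle$, and the fundamental domain is $D=\{v:\langle v,\alpha_i\rangle\ge0\ \forall i\}=Z\times\mathbb{R}_{\ge0}\langle\lambda_1,\dots,\lambda_r\rangle$.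 A saturated affine semigroup is a finitely generated $\mathbb{Z}_{\ge0}$-submodule $S\subset M$ such that $km\in S$ with $k\in\mathbb{Z}_{>0}$, $m\in M$ implies $m\in S$. For a semigroup $S$, $\mathbb{Z}[S]$ is its semigroup ring with basis $\chi^s$, $\chi^s\chi^t=\chi^{s+t}$, and $W$ acts by $w\chi^s=\chi^{ws}$. $\Psi_\circ:\mathbb{Z}[D\cap\Lambda_\circ]\to\mathbb{Z}[\Lambda_\circ]^W$ is the ring homomorphism with $\Psi_\circ(\chi^{\lambda_i})=\sum_{v\in W\lambda_i}\chi^v$, and $\Psi:\mathbb{Z}[D\cap\Lambda]\to\mathbb{Z}[\Lambda]^W$ is its $\mathbb{Z}[Z]$-linear extension: for $u=z+u_\circ$ with $z\in Z$, $u_\circ\in D\cap\Lambda_\circ$, $\Psi(\chi^u)=\chi^z\Psi_\circ(\chi^{u_\circ})$. For $u\in D\cap\Lambda$, $\underline{\chi}^u:=\sum_{v\in Wu}\chi^v$; these form a $\mathbb{Z}$-basis of $\mathbb{Z}[\Lambda]^W$. *)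

theory Defs
  imports "HOL-Analysis.Analysis" "HOL-Library.Poly_Mapping"
begin

text \<open>The real vector space V with its positive definite form is modelled by a type
  of class euclidean_space with its inner product. Elements of the semigroup ring
  Z[Lambda] are finitely supported integer-valued functions on V with the convolution
  product (type poly_mapping); the basis element chi^v is (single v 1).\<close>

definition refl :: "'a::real_inner \<Rightarrow> 'a \<Rightarrow> 'a" where
  "refl \<alpha> v = v - (2 * (v \<bullet> \<alpha>) / (\<alpha> \<bullet> \<alpha>)) *\<^sub>R \<alpha>"

inductive_set genmon :: "('a \<Rightarrow> 'a) set \<Rightarrow> ('a \<Rightarrow> 'a) set" for R where
  gen_id: "id \<in> genmon R"
| gen_step: "r \<in> R \<Longrightarrow> w \<in> genmon R \<Longrightarrow> r \<circ> w \<in> genmon R"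

text \<open>A finite group generated by reflections (for a finite set of maps, the monoid
  generated by involutions is the group generated by them).\<close>
definition finite_reflection_group :: "('a::real_inner \<Rightarrow> 'a) set \<Rightarrow> bool" where
  "finite_reflection_group W \<longleftrightarrow> finite W \<and>
     (\<exists>R. 0 \<notin> R \<and> W = genmon (refl ` R))"

definition lattice :: "'a::euclidean_space set \<Rightarrow> bool" where
  "lattice M \<longleftrightarrow> (\<exists>B. independent B \<and> span B = UNIV \<and>
     M = {\<Sum>b\<in>B. of_int (c b) *\<^sub>R b | c. True})"

definition root_system :: "('a::real_inner \<Rightarrow> 'a) set \<Rightarrow> 'a set \<Rightarrow> bool" where
  "root_system W \<Phi> \<longleftrightarrow> finite \<Phi> \<and> 0 \<notin> \<Phi> \<and>
     (\<forall>\<alpha>\<in>\<Phi>. \<forall>c::real. c *\<^sub>R \<alpha> \<in> \<Phi> \<longleftrightarrow> c = 1 \<or> c = -1) \<and>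
     (\<forall>\<alpha>\<in>\<Phi>. refl \<alpha> ` \<Phi> = \<Phi>) \<and>
     W = genmon (refl ` \<Phi>)"

definition simple_system :: "('a::real_inner \<Rightarrow> 'a) set \<Rightarrow> 'a set \<Rightarrow> bool" where
  "simple_system W \<Delta> \<longleftrightarrow> (\<exists>\<Phi>. root_system W \<Phi> \<and> \<Delta> \<subseteq> \<Phi> \<and> independent \<Delta> \<and>
     span \<Delta> = span \<Phi> \<and>
     (\<forall>\<beta>\<in>\<Phi>. \<exists>c. \<beta> = (\<Sum>\<alpha>\<in>\<Delta>. c \<alpha> *\<^sub>R \<alpha>) \<and>
        ((\<forall>\<alpha>\<in>\<Delta>. c \<alpha> \<ge> (0::real)) \<or> (\<forall>\<alpha>\<in>\<Delta>. c \<alpha> \<le> 0))))"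

definition cpair :: "'a::real_inner \<Rightarrow> 'a \<Rightarrow> real" where
  "cpair v \<alpha> = 2 * (v \<bullet> \<alpha>) / (\<alpha> \<bullet> \<alpha>)"

definition weights :: "'a::real_inner set \<Rightarrow> 'a set" where
  "weights \<Delta> = {v. \<forall>\<alpha>\<in>\<Delta>. cpair v \<alpha> \<in> \<int>}"

definition Zsp :: "'a::real_inner set \<Rightarrow> 'a set" where
  "Zsp \<Delta> = {v. \<forall>\<alpha>\<in>\<Delta>. v \<bullet> \<alpha> = 0}"

definition fdom :: "'a::real_inner set \<Rightarrow> 'a set" where
  "fdom \<Delta> = {v. \<forall>\<alpha>\<in>\<Delta>. v \<bullet> \<alpha> \<ge> 0}"

definition fund_weight :: "'a::euclidean_space set \<Rightarrow> 'a \<Rightarrow> 'a" where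
  "fund_weight \<Delta> \<alpha> = (THE l. l \<in> span \<Delta> \<and>
      (\<forall>\<beta>\<in>\<Delta>. cpair l \<beta> = (if \<beta> = \<alpha> then 1 else 0)))"

definition chi :: "'a \<Rightarrow> ('a \<Rightarrow>\<^sub>0 int)" where
  "chi v = Poly_Mapping.single v 1"

definition orbsum :: "('a \<Rightarrow> 'a) set \<Rightarrow> 'a \<Rightarrow> ('a \<Rightarrow>\<^sub>0 int)" where
  "orbsum W v = (\<Sum>x\<in>(\<lambda>w. w v) ` W. chi x)"

text \<open>Psi(chi^u) for u in D cap Lambda: writing u = z + sum_alpha n_alpha lambda_alpha
  with z in Z and n_alpha = cpair u alpha (nonnegative integer), Psi(chi^u) =
  chi^z * prod_alpha Psi_0(chi^lambda_alpha)^n_alpha, with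
  Psi_0(chi^lambda_alpha) the orbit sum of lambda_alpha (Psi_0 a ring hom).\<close>
definition Psi :: "('a::euclidean_space \<Rightarrow> 'a) set \<Rightarrow> 'a set \<Rightarrow> 'a \<Rightarrow> ('a \<Rightarrow>\<^sub>0 int)" where
  "Psi W \<Delta> u =
     (let n = (\<lambda>\<alpha>. nat \<lfloor>cpair u \<alpha>\<rfloor>);
          z = u - (\<Sum>\<alpha>\<in>\<Delta>. real (n \<alpha>) *\<^sub>R fund_weight \<Delta> \<alpha>)
      in chi z * (\<Prod>\<alpha>\<in>\<Delta>. (orbsum W (fund_weight \<Delta> \<alpha>)) ^ n \<alpha>))"

definition orb_coeffs :: "('a::euclidean_space \<Rightarrow> 'a) set \<Rightarrow> 'a set \<Rightarrow> ('a \<Rightarrow>\<^sub>0 int) \<Rightarrow> 'a \<Rightarrow> int" where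
  "orb_coeffs W \<Delta> f = (THE a. finite {v. a v \<noteq> 0} \<and>
      (\<forall>v. a v \<noteq> 0 \<longrightarrow> v \<in> fdom \<Delta> \<inter> weights \<Delta>) \<and>
      f = (\<Sum>v\<in>{v. a v \<noteq> 0}. of_int (a v) * orbsum W v))"

definition saturated_affine_semigroup :: "'a::real_vector set \<Rightarrow> 'a set \<Rightarrow> bool" where
  "saturated_affine_semigroup M S \<longleftrightarrow> S \<subseteq> M \<and>
     (\<exists>G. finite G \<and> G \<subseteq> M \<and> S = {\<Sum>g\<in>G. of_nat (n g) *\<^sub>R g | n. True}) \<and>
     (\<forall>k::nat. \<forall>m\<in>M. k > 0 \<longrightarrow> of_nat k *\<^sub>R m \<in> S \<longrightarrow> m \<in> S)"

end

theory Submission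
  imports Defs
begin

lemma refl_linear: "linear (refl a)"
  by (rule linearI) (auto simp: refl_def inner_add_left algebra_simps add_divide_distrib scaleR_add_left)

lemma refl_inner: assumes "a \<noteq> 0" shows "refl a x \<bullet> refl a y = x \<bullet> y"
proof -
  have "a \<bullet> a \<noteq> 0" using assms by simp
  then show ?thesis unfolding refl_def
    by (simp add: inner_diff_left inner_diff_right algebra_simps inner_commute)
qed

lemma refl_self: "a \<noteq> 0 \<Longrightarrow> refl a a = - a"
  by (simp add: refl_def algebra_simps) (metis scaleR_2 add_diff_cancel_left' diff_add_cancel)

lemma refl_refl: assumes "a \<noteq> 0" shows "refl a (refl a x) = x"
proof -
  have "a \<bullet> a \<noteq> 0" using assms by simp
  then show ?thesis unfolding refl_def
    by (simp add: inner_diff_left algebra_simps)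
qed

lemma refl_uminus: "refl (- a) = refl a"
  by (rule ext) (simp add: refl_def)

lemma refl_conj:
  assumes "linear u" "\<And>x y. u x \<bullet> u y = x \<bullet> y"
  shows "refl (u a) (u x) = u (refl a x)"
  using assms unfolding refl_def by (simp add: linear_diff linear_scale)

lemma cpair_refl: "cpair (refl a x) b = cpair x b - cpair x a * cpair a b"
  by (cases "a = 0"; cases "b = 0") (simp_all add: cpair_def refl_def inner_diff_left diff_divide_distrib)

fun wd :: "'a::real_inner list \<Rightarrow> 'a \<Rightarrow> 'a" where
  "wd [] = id"
| "wd (a # as) = refl a \<circ> wd as"

lemma wd_append: "wd (xs @ ys) = wd xs \<circ> wd ys"
  by (induction xs) auto

lemma exists_dual:
  fixes D :: "'a::euclidean_space set"
  assumes "independent D"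
  shows "\<exists>l. l \<in> span D \<and> (\<forall>b\<in>D. l \<bullet> b = f b)"
proof -
  obtain g where g: "linear g" "\<forall>x\<in>D. g x = f x"
    using linear_independent_extend[OF assms] by blast
  define r where "r = (\<Sum>b\<in>Basis. g b *\<^sub>R b)"
  have gr: "g x = x \<bullet> r" for x
  proof -
    have "g x = g (\<Sum>b\<in>Basis. (x \<bullet> b) *\<^sub>R b)" by (simp add: euclidean_representation)
    also have "\<dots> = (\<Sum>b\<in>Basis. (x \<bullet> b) * g b)"
      using g(1) by (simp add: linear_sum linear_scale)
    also have "\<dots> = x \<bullet> r" by (simp add: r_def inner_sum_right mult.commute)
    finally show ?thesis .
  qed
  obtain y z where yz: "y \<in> span D" "\<And>w. w \<in> span D \<Longrightarrow> orthogonal z w" "r = y + z"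
    using orthogonal_subspace_decomp_exists by blast
  have "y \<bullet> b = f b" if "b \<in> D" for b
  proof -
    have "z \<bullet> b = 0" using yz(2)[of b] that by (simp add: orthogonal_def span_base)
    then have "y \<bullet> b = r \<bullet> b" by (simp add: yz(3) inner_add_left)
    also have "\<dots> = f b" using gr[of b] g(2) that by (simp add: inner_commute)
    finally show ?thesis .
  qed
  with yz(1) show ?thesis by blast
qed

locale rsys =
  fixes Phi Del :: "'a::euclidean_space set"
  assumes finP: "finite Phi" and nzP: "0 \<notin> Phi"
  and multP: "\<And>a c. a \<in> Phi \<Longrightarrow> c *\<^sub>R a \<in> Phi \<longleftrightarrow> c = 1 \<or> c = -1"
  and reflP: "\<And>a. a \<in> Phi \<Longrightarrow> refl a ` Phi = Phi"
  and subD: "Del \<subseteq> Phi" and indD: "independent Del"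
  and spanD: "span Del = span Phi"
  and sgnP: "\<And>b. b \<in> Phi \<Longrightarrow> \<exists>c. b = (\<Sum>a\<in>Del. c a *\<^sub>R a) \<and> ((\<forall>a\<in>Del. c a \<ge> 0) \<or> (\<forall>a\<in>Del. c a \<le> 0))"
begin

lemma finD: "finite Del" using finP subD finite_subset by blast

lemma nzD: "a \<in> Del \<Longrightarrow> a \<noteq> 0" using nzP subD by blast

lemma neg_root: "b \<in> Phi \<Longrightarrow> - b \<in> Phi"
  using multP[of b "-1"] by simp

lemma refl_root: "a \<in> Phi \<Longrightarrow> b \<in> Phi \<Longrightarrow> refl a b \<in> Phi"
  using reflP by blast

lemma coef_unique:
  assumes "(\<Sum>a\<in>Del. c a *\<^sub>R a) = (\<Sum>a\<in>Del. d a *\<^sub>R a)" "a \<in> Del"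
  shows "c a = d a"
proof (rule ccontr)
  assume "c a \<noteq> d a"
  have "(\<Sum>a\<in>Del. (c a - d a) *\<^sub>R a) = 0"
    using assms(1) by (simp add: scaleR_diff_left sum_subtractf)
  then have "dependent Del"
    unfolding dependent_finite[OF finD] using \<open>c a \<noteq> d a\<close> assms(2)
    by (intro exI[of _ "\<lambda>a. c a - d a"]) auto
  then show False using indD by simp
qed

definition pos :: "'a \<Rightarrow> bool" where
  "pos x \<longleftrightarrow> (\<exists>c. x = (\<Sum>a\<in>Del. c a *\<^sub>R a) \<and> (\<forall>a\<in>Del. 0 \<le> c a))"

lemma root_pos_neg: "b \<in> Phi \<Longrightarrow> pos b \<or> pos (- b)"
proof -
  assume "b \<in> Phi"
  from sgnP[OF this] obtain c where c: "b = (\<Sum>a\<in>Del. c a *\<^sub>R a)"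
    "(\<forall>a\<in>Del. c a \<ge> 0) \<or> (\<forall>a\<in>Del. c a \<le> 0)" by blast
  show ?thesis
  proof (cases "\<forall>a\<in>Del. c a \<ge> 0")
    case True then show ?thesis using c unfolding pos_def by blast
  next
    case False
    then have "\<forall>a\<in>Del. - c a \<ge> 0" using c(2) by auto
    moreover have "- b = (\<Sum>a\<in>Del. (- c a) *\<^sub>R a)" using c(1) by (simp add: sum_negf)
    ultimately have "pos (- b)" unfolding pos_def by (intro exI[of _ "\<lambda>a. - c a"]) auto
    then show ?thesis by blast
  qed
qed

lemma pos_not_neg: assumes "b \<in> Phi" "pos b" "pos (- b)" shows False
proof -
  obtain c where c: "b = (\<Sum>a\<in>Del. c a *\<^sub>R a)" "\<forall>a\<in>Del. 0 \<le> c a" using assms(2) pos_def by auto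
  obtain d where d: "- b = (\<Sum>a\<in>Del. d a *\<^sub>R a)" "\<forall>a\<in>Del. 0 \<le> d a" using assms(3) pos_def by auto
  have "b = (\<Sum>a\<in>Del. (- d a) *\<^sub>R a)" using d(1) by (simp add: sum_negf) (metis minus_minus)
  then have "\<forall>a\<in>Del. c a = - d a" using coef_unique c(1) by metis
  then have "\<forall>a\<in>Del. c a = 0" using c(2) d(2) by force
  then have "b = 0" using c(1) by simp
  then show False using assms(1) nzP by simp
qed

lemma sum_delta_scale: "a \<in> Del \<Longrightarrow> (\<Sum>g\<in>Del. (if g = a then t else 0) *\<^sub>R g) = t *\<^sub>R a"
proof -
  assume a: "a \<in> Del"
  have "(\<Sum>g\<in>Del. (if g = a then t else 0) *\<^sub>R g) = (\<Sum>g\<in>Del. if g = a then t *\<^sub>R g else 0)"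
    by (rule sum.cong) auto
  also have "\<dots> = t *\<^sub>R a" using a finD by (simp add: sum.delta)
  finally show ?thesis .
qed

lemma pos_simple: "a \<in> Del \<Longrightarrow> pos a"
  unfolding pos_def
  by (rule exI[of _ "\<lambda>g. if g = a then 1 else 0"]) (simp add: sum_delta_scale)

lemma pos_add: "pos x \<Longrightarrow> pos y \<Longrightarrow> pos (x + y)"
  unfolding pos_def
  apply clarify
  subgoal for c d by (rule exI[of _ "\<lambda>a. c a + d a"]) (simp add: scaleR_add_left sum.distrib)
  done

lemma pos_scale: "pos x \<Longrightarrow> 0 \<le> t \<Longrightarrow> pos (t *\<^sub>R x)"
  unfolding pos_def
  apply clarify
  subgoal for c by (rule exI[of _ "\<lambda>a. t * c a"]) (simp add: scaleR_sum_right)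
  done

lemma dom_pos: assumes "x \<in> fdom Del" "pos y" shows "0 \<le> x \<bullet> y"
proof -
  obtain c where c: "y = (\<Sum>a\<in>Del. c a *\<^sub>R a)" "\<forall>a\<in>Del. 0 \<le> c a" using assms(2) pos_def by auto
  have "x \<bullet> y = (\<Sum>a\<in>Del. c a * (x \<bullet> a))" by (simp add: c(1) inner_sum_right)
  also have "\<dots> \<ge> 0" using c(2) assms(1) by (intro sum_nonneg) (simp add: fdom_def)
  finally show ?thesis .
qed

lemma refl_pos:
  assumes a: "a \<in> Del" and b: "b \<in> Phi" "pos b" "b \<noteq> a"
  shows "pos (refl a b)"
proof (rule ccontr)
  assume np: "\<not> pos (refl a b)"
  have aP: "a \<in> Phi" using a subD by blast
  have rP: "refl a b \<in> Phi" using refl_root[OF aP b(1)] .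
  then have "pos (- refl a b)" using root_pos_neg np by blast
  then obtain d where d: "- refl a b = (\<Sum>g\<in>Del. d g *\<^sub>R g)" "\<forall>g\<in>Del. 0 \<le> d g" using pos_def by auto
  obtain c where c: "b = (\<Sum>g\<in>Del. c g *\<^sub>R g)" "\<forall>g\<in>Del. 0 \<le> c g" using b(2) pos_def by auto
  define k where "k = 2 * (b \<bullet> a) / (a \<bullet> a)"
  have "refl a b = b - k *\<^sub>R a" by (simp add: refl_def k_def)
  also have "\<dots> = (\<Sum>g\<in>Del. (c g - (if g = a then k else 0)) *\<^sub>R g)"
    using a by (simp add: c(1) scaleR_diff_left sum_subtractf sum_delta_scale)
  finally have e1: "refl a b = (\<Sum>g\<in>Del. (c g - (if g = a then k else 0)) *\<^sub>R g)" .
  have e2: "refl a b = (\<Sum>g\<in>Del. (- d g) *\<^sub>R g)" using d(1) by (simp add: sum_negf) (metis minus_minus)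
  have "\<forall>g\<in>Del. g \<noteq> a \<longrightarrow> c g = - d g"
    using coef_unique[OF e1[symmetric, unfolded e2]] by (metis diff_zero)
  then have cz: "\<forall>g\<in>Del. g \<noteq> a \<longrightarrow> c g = 0" using c(2) d(2) by force
  have "b = (\<Sum>g\<in>Del. (if g = a then c a else 0) *\<^sub>R g)"
    unfolding c(1) by (rule sum.cong) (use cz in auto)
  also have "\<dots> = c a *\<^sub>R a" using a by (simp add: sum_delta_scale)
  finally have "b = c a *\<^sub>R a" .
  then have "c a = 1 \<or> c a = -1" using multP[OF aP, of "c a"] b(1) by simp
  then have "c a = 1" using c(2) a by force
  then show False using \<open>b = c a *\<^sub>R a\<close> b(3) by simp
qed

lemma wd_linear: "linear (wd as)"
proof (induction as)
  case (Cons a as)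
  then show ?case using linear_compose[OF Cons refl_linear] by (simp add: o_def)
qed (simp add: bounded_linear.linear)

lemma wd_inner: "set as \<subseteq> Phi \<Longrightarrow> wd as x \<bullet> wd as y = x \<bullet> y"
proof (induction as)
  case (Cons a as)
  then have "a \<noteq> 0" using nzP by auto
  then show ?case using Cons by (simp add: refl_inner)
qed simp

lemma wd_root: "set as \<subseteq> Phi \<Longrightarrow> b \<in> Phi \<Longrightarrow> wd as b \<in> Phi"
  by (induction as) (auto simp: refl_root)

lemma wd_rev: "set as \<subseteq> Phi \<Longrightarrow> wd (rev as) (wd as x) = x"
proof (induction as arbitrary: x)
  case (Cons a as)
  then have "a \<noteq> 0" using nzP by auto
  then show ?case using Cons by (simp add: wd_append refl_refl)
qed simp

lemma wd_rev2: "set as \<subseteq> Phi \<Longrightarrow> wd as (wd (rev as) x) = x"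
  using wd_rev[of "rev as"] by simp

lemma wd_conj: "set as \<subseteq> Phi \<Longrightarrow> refl (wd as a) (wd as x) = wd as (refl a x)"
  by (rule refl_conj[OF wd_linear wd_inner])

end

lemma discrete_ivt: "\<not> P (0::nat) \<Longrightarrow> P n \<Longrightarrow> \<exists>j<n. \<not> P j \<and> P (Suc j)"
proof (induction n)
  case (Suc n)
  show ?case
  proof (cases "P n")
    case True
    then obtain j where "j < n" "\<not> P j" "P (Suc j)" using Suc by blast
    then show ?thesis using less_SucI by blast
  next
    case False
    then show ?thesis using Suc by blast
  qed
qed simp

context rsys
begin

definition rho where "rho = (SOME l. l \<in> span Del \<and> (\<forall>b\<in>Del. l \<bullet> b = 1))"

lemma rho: "a \<in> Del \<Longrightarrow> a \<bullet> rho = 1"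
proof -
  have "\<exists>l. l \<in> span Del \<and> (\<forall>b\<in>Del. l \<bullet> b = 1)" using exists_dual[OF indD, of "\<lambda>_. 1"] by simp
  from someI_ex[OF this] show "a \<in> Del \<Longrightarrow> a \<bullet> rho = 1" unfolding rho_def by (simp add: inner_commute)
qed

lemma reach_simple:
  "b \<in> Phi \<Longrightarrow> pos b \<Longrightarrow> \<exists>as a. set as \<subseteq> Del \<and> a \<in> Del \<and> wd as b = a"
proof (induction "card {d\<in>Phi. d \<bullet> rho < b \<bullet> rho}" arbitrary: b rule: less_induct)
  case less
  show ?case
  proof (cases "b \<in> Del")
    case True
    then show ?thesis by (intro exI[of _ "[]"] exI[of _ b]) auto
  next
    case False
    obtain c where c: "b = (\<Sum>a\<in>Del. c a *\<^sub>R a)" "\<forall>a\<in>Del. 0 \<le> c a" using less(3) pos_def by auto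
    have "b \<noteq> 0" using nzP less(2) by auto
    then have "0 < b \<bullet> b" by simp
    also have "b \<bullet> b = (\<Sum>a\<in>Del. c a * (b \<bullet> a))"
      by (subst (2) c(1)) (simp add: inner_sum_right)
    finally have sp: "0 < (\<Sum>a\<in>Del. c a * (b \<bullet> a))" .
    obtain a where a: "a \<in> Del" "0 < b \<bullet> a"
    proof (rule ccontr)
      assume "\<not> thesis"
      then have "\<forall>a\<in>Del. b \<bullet> a \<le> 0" using that by force
      then have "(\<Sum>a\<in>Del. c a * (b \<bullet> a)) \<le> 0"
        using c(2) by (intro sum_nonpos) (simp add: mult_nonneg_nonpos)
      then show False using sp by simp
    qed
    have aP: "a \<in> Phi" using a subD by blast
    have ba: "b \<noteq> a" using False a by blast
    define b' where "b' = refl a b"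
    have b'P: "b' \<in> Phi" using refl_root[OF aP less(2)] b'_def by simp
    have b'pos: "pos b'" using refl_pos[OF a(1) less(2,3) ba] b'_def by simp
    have "a \<bullet> a > 0" using nzD[OF a(1)] by simp
    then have k: "2 * (b \<bullet> a) / (a \<bullet> a) > 0" using a(2) by simp
    have "b' \<bullet> rho = b \<bullet> rho - 2 * (b \<bullet> a) / (a \<bullet> a)"
      using rho[OF a(1)] by (simp add: b'_def refl_def inner_diff_left)
    then have lt: "b' \<bullet> rho < b \<bullet> rho" using k by simp
    have "{d\<in>Phi. d \<bullet> rho < b' \<bullet> rho} \<subset> {d\<in>Phi. d \<bullet> rho < b \<bullet> rho}"
      using lt b'P by auto
    then have "card {d\<in>Phi. d \<bullet> rho < b' \<bullet> rho} < card {d\<in>Phi. d \<bullet> rho < b \<bullet> rho}"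
      by (rule psubset_card_mono[rotated]) (simp add: finP)
    from less(1)[OF this b'P b'pos] obtain as a' where
      IH: "set as \<subseteq> Del" "a' \<in> Del" "wd as b' = a'" by blast
    show ?thesis
      by (rule exI[of _ "as @ [a]"], rule exI[of _ a']) (use IH a b'_def in \<open>auto simp: wd_append\<close>)
  qed
qed

lemma subDP: "set as \<subseteq> Del \<Longrightarrow> set as \<subseteq> Phi" using subD by blast

lemma refl_words: assumes "b \<in> Phi" shows "\<exists>as. set as \<subseteq> Del \<and> refl b = wd as"
proof -
  have main: "\<exists>as. set as \<subseteq> Del \<and> refl b = wd as" if b: "b \<in> Phi" "pos b" for b
  proof -
    obtain as a where aa: "set as \<subseteq> Del" "a \<in> Del" "wd as b = a" using reach_simple[OF b] by blast
    have "refl b x = wd (rev as @ a # as) x" for x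
    proof -
      have "wd (rev as @ a # as) x = wd (rev as) (refl (wd as b) (wd as x))"
        using aa by (simp add: wd_append)
      also have "\<dots> = wd (rev as) (wd as (refl b x))" using wd_conj[OF subDP[OF aa(1)]] by simp
      also have "\<dots> = refl b x" using wd_rev[OF subDP[OF aa(1)]] by simp
      finally show ?thesis by simp
    qed
    then show ?thesis using aa by (intro exI[of _ "rev as @ a # as"]) auto
  qed
  show ?thesis
  proof (cases "pos b")
    case True then show ?thesis using main assms by blast
  next
    case False
    then have "pos (- b)" using root_pos_neg assms by blast
    then obtain as where "set as \<subseteq> Del" "refl (- b) = wd as" using main[of "- b"] neg_root[OF assms] by blast
    then show ?thesis using refl_uminus[of b] by auto
  qed
qed

abbreviation "Wg \<equiv> genmon (refl ` Phi)"

lemma W_words: "w \<in> Wg \<longleftrightarrow> (\<exists>as. set as \<subseteq> Del \<and> w = wd as)"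
proof
  assume "w \<in> Wg"
  then show "\<exists>as. set as \<subseteq> Del \<and> w = wd as"
  proof (induction rule: genmon.induct)
    case gen_id
    then show ?case by (intro exI[of _ "[]"]) auto
  next
    case (gen_step r w)
    then obtain b where b: "b \<in> Phi" "r = refl b" by blast
    obtain bs where bs: "set bs \<subseteq> Del" "refl b = wd bs" using refl_words[OF b(1)] by blast
    obtain as where as: "set as \<subseteq> Del" "w = wd as" using gen_step by blast
    show ?case using b bs as by (intro exI[of _ "bs @ as"]) (auto simp: wd_append)
  qed
next
  assume "\<exists>as. set as \<subseteq> Del \<and> w = wd as"
  then obtain as where as: "set as \<subseteq> Del" "w = wd as" by blast
  have "wd as \<in> Wg" using as(1)
  proof (induction as)
    case Nil then show ?case using genmon.gen_id[of "refl ` Phi"] by (simp add: id_def)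
  next
    case (Cons a as)
    then have "refl a \<in> refl ` Phi" using subD by auto
    then show ?case using Cons genmon.gen_step[of "refl a" "refl ` Phi" "wd as"] by (simp add: o_def)
  qed
  then show "w \<in> Wg" using as by simp
qed

lemma W_wordsD: assumes "w \<in> Wg" obtains as where "set as \<subseteq> Del" "w = wd as"
  using W_words[THEN iffD1, OF assms] by blast

lemma W_linear: "w \<in> Wg \<Longrightarrow> linear w" by (erule W_wordsD) (simp add: wd_linear)

lemma W_inner: "w \<in> Wg \<Longrightarrow> w x \<bullet> w y = x \<bullet> y" by (erule W_wordsD) (simp add: wd_inner subDP)

lemma W_root: "w \<in> Wg \<Longrightarrow> b \<in> Phi \<Longrightarrow> w b \<in> Phi" by (erule W_wordsD) (simp add: wd_root subDP)

lemma W_comp: "w \<in> Wg \<Longrightarrow> v \<in> Wg \<Longrightarrow> w \<circ> v \<in> Wg"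
proof -
  assume "w \<in> Wg" "v \<in> Wg"
  then obtain as bs where "set as \<subseteq> Del" "w = wd as" "set bs \<subseteq> Del" "v = wd bs"
    using W_words[THEN iffD1] by blast
  then show ?thesis using W_words[of "w \<circ> v"] by (auto simp: wd_append intro!: exI[of _ "as @ bs"])
qed

lemma W_inv: "w \<in> Wg \<Longrightarrow> \<exists>v\<in>Wg. (\<forall>x. v (w x) = x) \<and> (\<forall>x. w (v x) = x)"
proof -
  assume "w \<in> Wg"
  then obtain as where as: "set as \<subseteq> Del" "w = wd as" using W_words[THEN iffD1] by blast
  then have "wd (rev as) \<in> Wg" by (intro W_words[THEN iffD2] exI[of _ "rev as"]) auto
  then show ?thesis using as wd_rev[OF subDP[OF as(1)]] wd_rev2[OF subDP[OF as(1)]] by (intro bexI[of _ "wd (rev as)"]) auto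
qed

lemma W_refl: "a \<in> Phi \<Longrightarrow> refl a \<in> Wg"
  using genmon.gen_step[OF _ genmon.gen_id, of "refl a" "refl ` Phi"] by simp

lemma W_id: "id \<in> Wg" by (rule genmon.gen_id)

lemma deletion:
  assumes xs: "set xs \<subseteq> Del" and a: "a \<in> Del" and np: "pos (- wd xs a)"
  shows "\<exists>ys. set ys \<subseteq> Del \<and> length ys < length xs \<and> wd xs \<circ> refl a = wd ys"
proof -
  have aP: "a \<in> Phi" using a subD by blast
  define B where "B j = wd (drop j xs) a" for j
  have "set (drop j xs) \<subseteq> Phi" for j using subDP[OF xs] set_drop_subset by (meson order_trans)
  then have BP: "B j \<in> Phi" for j unfolding B_def using wd_root[OF _ aP] by blast
  have "pos (B (length xs))" unfolding B_def using pos_simple[OF a] by simp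
  moreover have "\<not> pos (B 0)" unfolding B_def using np pos_not_neg[OF wd_root[OF subDP[OF xs] aP]] by auto
  ultimately obtain j where j: "j < length xs" "\<not> pos (B j)" "pos (B (Suc j))"
    using discrete_ivt[of "\<lambda>j. pos (B j)"] by blast
  have dj: "drop j xs = xs ! j # drop (Suc j) xs" using j(1) by (rule Cons_nth_drop_Suc[symmetric])
  have xj: "xs ! j \<in> Del" using j(1) xs nth_mem by blast
  have Bj: "B j = refl (xs ! j) (B (Suc j))" unfolding B_def by (simp add: dj)
  have eq: "B (Suc j) = xs ! j" using refl_pos[OF xj BP j(3)] j(2) Bj by auto
  define u where "u = wd (drop (Suc j) xs)"
  have us: "set (drop (Suc j) xs) \<subseteq> Phi" using subDP[OF xs] set_drop_subset by (meson order_trans)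
  have ua: "u a = xs ! j" using eq unfolding B_def u_def .
  have "wd xs (refl a x) = wd (take j xs @ drop (Suc j) xs) x" for x
  proof -
    have "wd xs (refl a x) = wd (take j xs) (refl (xs ! j) (u (refl a x)))"
      by (subst append_take_drop_id[symmetric, of xs j]) (simp add: wd_append dj u_def)
    also have "refl (xs ! j) (u (refl a x)) = u (refl a (refl a x))"
      unfolding ua[symmetric] u_def by (rule wd_conj[OF us])
    also have "\<dots> = u x" using refl_refl[OF nzD[OF a]] by simp
    finally show ?thesis by (simp add: wd_append u_def)
  qed
  moreover have "set (take j xs @ drop (Suc j) xs) \<subseteq> Del" using xs set_take_subset[of j xs] set_drop_subset[of "Suc j" xs]
    by auto
  moreover have "length (take j xs @ drop (Suc j) xs) < length xs" using j(1) by simp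
  ultimately show ?thesis by (intro exI[of _ "take j xs @ drop (Suc j) xs"]) auto
qed

lemma dom_unique_wd:
  "set as \<subseteq> Del \<Longrightarrow> l \<in> fdom Del \<Longrightarrow> wd as l \<in> fdom Del \<Longrightarrow> wd as l = l"
proof (induction "length as" arbitrary: as rule: less_induct)
  case less
  show ?case
  proof (cases as rule: rev_exhaust)
    case Nil then show ?thesis by simp
  next
    case (snoc xs a)
    have xs: "set xs \<subseteq> Del" and a: "a \<in> Del" using less(2) snoc by auto
    have aP: "a \<in> Phi" using a subD by blast
    have wsplit: "wd as = wd xs \<circ> refl a" using snoc by (simp add: wd_append)
    have r: "wd xs a \<in> Phi" using wd_root[OF subDP[OF xs] aP] .
    show ?thesis
    proof (cases "pos (wd xs a)")
      case False
      then have "pos (- wd xs a)" using root_pos_neg r by blast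
      from deletion[OF xs a this] obtain ys where ys: "set ys \<subseteq> Del" "length ys < length xs" "wd xs \<circ> refl a = wd ys"
        by blast
      have "length ys < length as" using ys(2) snoc by simp
      from less(1)[OF this ys(1) less(3)] less(4) show ?thesis using wsplit ys(3) by simp
    next
      case True
      have lin: "linear (wd xs)" by (rule wd_linear)
      have "wd as a = - wd xs a"
        using wsplit refl_self[OF nzD[OF a]] linear_neg[OF lin] by simp
      have "l \<bullet> a = wd as l \<bullet> wd as a" using wd_inner[OF subDP[OF less(2)]] by simp
      also have "\<dots> = - (wd as l \<bullet> wd xs a)" using \<open>wd as a = - wd xs a\<close> by simp
      also have "\<dots> \<le> 0" using dom_pos[OF less(4) True] by simp
      finally have "l \<bullet> a \<le> 0" .
      moreover have "l \<bullet> a \<ge> 0" using less(3) a by (simp add: fdom_def)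
      ultimately have "l \<bullet> a = 0" by simp
      then have "refl a l = l" by (simp add: refl_def)
      then have e: "wd as l = wd xs l" using wsplit by simp
      have "length xs < length as" using snoc by simp
      from less(1)[OF this xs less(3)] less(4) e show ?thesis by simp
    qed
  qed
qed

lemma dom_unique: "w \<in> Wg \<Longrightarrow> l \<in> fdom Del \<Longrightarrow> w l \<in> fdom Del \<Longrightarrow> w l = l"
  by (erule W_wordsD) (simp add: dom_unique_wd)

end

lemma rat_common_denom:
  assumes "finite I" "\<forall>i\<in>I. t i \<in> \<rat>"
  shows "\<exists>k::nat. k > 0 \<and> (\<forall>i\<in>I. real k * t i \<in> \<int>)"
  using assms
proof (induction I rule: finite_induct)
  case empty
  then show ?case by (intro exI[of _ 1]) auto
next
  case (insert i I)
  then obtain k :: nat where k: "k > 0" "\<forall>j\<in>I. real k * t j \<in> \<int>" by auto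
  have "t i \<in> \<rat>" using insert by auto
  then obtain p q where pq: "q > 0" "t i = of_int p / of_int q"
    by (rule Rats_cases')
  define k' where "k' = k * nat q"
  have k'pos: "k' > 0" using k(1) pq(1) by (simp add: k'_def)
  have rk': "real k' = real k * of_int q" using pq(1) by (simp add: k'_def)
  have "real k' * t j \<in> \<int>" if "j \<in> insert i I" for j
  proof (cases "j = i")
    case True
    have "real k' * t i = real k * of_int p" using pq rk' by simp
    then show ?thesis using True by simp
  next
    case False
    then have "real k * t j \<in> \<int>" using k that by auto
    then have "of_int q * (real k * t j) \<in> \<int>" by (simp add: Ints_mult)
    then show ?thesis by (simp add: rk' mult_ac)
  qed
  then show ?case using k'pos by blast
qed

lemma sum_shift:
  fixes p :: "'i \<Rightarrow> 'a::real_vector"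
  assumes "sum t I = 1"
  shows "y + (\<Sum>i\<in>I. t i *\<^sub>R p i) = (\<Sum>i\<in>I. t i *\<^sub>R (y + p i))"
proof -
  have "(\<Sum>i\<in>I. t i *\<^sub>R (y + p i)) = (\<Sum>i\<in>I. t i *\<^sub>R y) + (\<Sum>i\<in>I. t i *\<^sub>R p i)"
    by (simp add: scaleR_add_right sum.distrib)
  also have "(\<Sum>i\<in>I. t i *\<^sub>R y) = y" using assms by (simp add: scaleR_sum_left[symmetric])
  finally show ?thesis by simp
qed

locale rsysf = rsys Phi Del for Phi Del :: "'a::euclidean_space set" +
  assumes finW: "finite (genmon (refl ` Phi))"
  and integ: "\<And>a b. a \<in> Del \<Longrightarrow> b \<in> Del \<Longrightarrow> cpair a b \<in> \<int>"
begin

lemma dom_exists: "\<exists>w\<in>Wg. w x \<in> fdom Del"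
proof -
  define Ob where "Ob = (\<lambda>w. w x) ` Wg"
  have fO: "finite Ob" using finW Ob_def by simp
  have neO: "Ob \<noteq> {}" using W_id Ob_def by auto
  define m where "m = Max ((\<lambda>y. y \<bullet> rho) ` Ob)"
  have "m \<in> (\<lambda>y. y \<bullet> rho) ` Ob" unfolding m_def using fO neO by (intro Max_in) auto
  then obtain w where w: "w \<in> Wg" "w x \<bullet> rho = m" unfolding Ob_def by auto
  have mx: "y \<bullet> rho \<le> m" if "y \<in> Ob" for y unfolding m_def using fO that by (intro Max_ge) auto
  have "w x \<in> fdom Del"
  proof (rule ccontr)
    assume "w x \<notin> fdom Del"
    then obtain a where a: "a \<in> Del" "w x \<bullet> a < 0" by (auto simp: fdom_def not_le)
    have aP: "a \<in> Phi" using a subD by blast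
    have "refl a \<circ> w \<in> Wg" using W_comp[OF W_refl[OF aP] w(1)] .
    then have "(refl a \<circ> w) x \<in> Ob" unfolding Ob_def by (rule imageI)
    then have "refl a (w x) \<in> Ob" by simp
    then have le: "refl a (w x) \<bullet> rho \<le> m" by (rule mx)
    have "a \<bullet> a > 0" using nzD[OF a(1)] by simp
    then have k: "2 * (w x \<bullet> a) / (a \<bullet> a) < 0" using a(2) by (simp add: divide_neg_pos)
    have "refl a (w x) \<bullet> rho = w x \<bullet> rho - 2 * (w x \<bullet> a) / (a \<bullet> a)"
      using rho[OF a(1)] by (simp add: refl_def inner_diff_left)
    then show False using k le w(2) by simp
  qed
  then show ?thesis using w(1) by blast
qed

lemma refl_cpair: "refl a x = x - cpair x a *\<^sub>R a"
  by (simp add: refl_def cpair_def)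

lemma cpair_add: "cpair (x + y) a = cpair x a + cpair y a"
  by (simp add: cpair_def inner_add_left add_divide_distrib)

lemma cpair_self: "a \<noteq> 0 \<Longrightarrow> cpair a a = 2"
  by (simp add: cpair_def)

lemma cpair_refl_self: "a \<noteq> 0 \<Longrightarrow> cpair (refl a x) a = - cpair x a"
  using cpair_refl[of a x a] cpair_self[of a] by simp

lemma weights_refl: "x \<in> weights Del \<Longrightarrow> a \<in> Del \<Longrightarrow> refl a x \<in> weights Del"
  unfolding weights_def using integ by (auto simp: cpair_refl intro!: Ints_diff Ints_mult)

lemma weights_wd: "set as \<subseteq> Del \<Longrightarrow> x \<in> weights Del \<Longrightarrow> wd as x \<in> weights Del"
  by (induction as) (auto simp: weights_refl)

lemma weights_W: "w \<in> Wg \<Longrightarrow> x \<in> weights Del \<Longrightarrow> w x \<in> weights Del"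
  by (erule W_wordsD) (simp add: weights_wd)

definition Zl :: "'a set" where
  "Zl = {\<Sum>a\<in>Del. of_int (c a) *\<^sub>R a | c. True}"

lemma Zl_add: "x \<in> Zl \<Longrightarrow> y \<in> Zl \<Longrightarrow> x + y \<in> Zl"
  unfolding Zl_def
  apply clarify
  subgoal for c d by (rule exI[of _ "\<lambda>a. c a + d a"]) (simp add: scaleR_add_left sum.distrib)
  done

lemma Zl_zero: "0 \<in> Zl"
  unfolding Zl_def by (rule CollectI, rule exI[of _ "\<lambda>_. 0"]) simp

lemma Zl_simple: "a \<in> Del \<Longrightarrow> k \<in> \<int> \<Longrightarrow> k *\<^sub>R a \<in> Zl"
proof -
  assume a: "a \<in> Del" "k \<in> \<int>"
  then obtain n where n: "k = of_int n" by (auto elim: Ints_cases)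
  have "(\<Sum>b\<in>Del. of_int (if b = a then n else 0) *\<^sub>R b) = (\<Sum>b\<in>Del. (if b = a then k else 0) *\<^sub>R b)"
    by (rule sum.cong) (auto simp: n)
  also have "\<dots> = k *\<^sub>R a" using sum_delta_scale[OF a(1)] .
  finally have eq: "(\<Sum>b\<in>Del. of_int (if b = a then n else 0) *\<^sub>R b) = k *\<^sub>R a" .
  show ?thesis unfolding Zl_def using eq by (intro CollectI exI[of _ "\<lambda>b. if b = a then n else 0"]) simp
qed

lemma diff_wd_Zl: "set as \<subseteq> Del \<Longrightarrow> x \<in> weights Del \<Longrightarrow> x - wd as x \<in> Zl"
proof (induction as)
  case Nil then show ?case by (simp add: Zl_zero)
next
  case (Cons a as)
  have a: "a \<in> Del" and as: "set as \<subseteq> Del" using Cons by auto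
  have wx: "wd as x \<in> weights Del" using weights_wd[OF as Cons(3)] .
  have "wd as x - refl a (wd as x) = cpair (wd as x) a *\<^sub>R a" by (simp add: refl_cpair)
  moreover have "cpair (wd as x) a \<in> \<int>" using wx a by (simp add: weights_def)
  ultimately have "wd as x - refl a (wd as x) \<in> Zl" using Zl_simple[OF a] by simp
  then have "(x - wd as x) + (wd as x - refl a (wd as x)) \<in> Zl" by (rule Zl_add[OF Cons(1)[OF as Cons(3)]])
  then show ?case by simp
qed

lemma diff_W_Zl: "w \<in> Wg \<Longrightarrow> x \<in> weights Del \<Longrightarrow> x - w x \<in> Zl"
  by (erule W_wordsD) (simp add: diff_wd_Zl)

lemma fix_wd: "set as \<subseteq> Del \<Longrightarrow> z \<in> Zsp Del \<Longrightarrow> wd as z = z"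
  by (induction as) (auto simp: Zsp_def refl_def)

lemma fix_W: "w \<in> Wg \<Longrightarrow> z \<in> Zsp Del \<Longrightarrow> w z = z"
  by (erule W_wordsD) (simp add: fix_wd)

definition P :: "'a \<Rightarrow> 'a set" where
  "P nu = {\<Sum>w\<in>Wg. t w *\<^sub>R w nu | t. (\<forall>w\<in>Wg. t w \<in> \<rat> \<and> 0 \<le> t w) \<and> sum t Wg = 1}"

lemma P_orbit: assumes "v \<in> Wg" shows "v nu \<in> P nu"
proof -
  have "(\<Sum>w\<in>Wg. (if w = v then 1 else 0) *\<^sub>R w nu) = (\<Sum>w\<in>Wg. if w = v then v nu else 0)"
    by (rule sum.cong) auto
  also have "\<dots> = v nu" using assms finW by (simp add: sum.delta)
  finally have e: "(\<Sum>w\<in>Wg. (if w = v then 1 else 0) *\<^sub>R w nu) = v nu" .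
  have s: "sum (\<lambda>w. if w = v then 1 else 0) Wg = (1::real)" using assms finW by (simp add: sum.delta)
  show ?thesis unfolding P_def using e s by (intro CollectI exI[of _ "\<lambda>w. if w = v then 1 else 0"]) auto
qed

lemma P_comb:
  assumes I: "finite I" and c: "\<forall>i\<in>I. c i \<in> \<rat> \<and> 0 \<le> c i" "sum c I = 1"
    and p: "\<forall>i\<in>I. p i \<in> P nu"
  shows "(\<Sum>i\<in>I. c i *\<^sub>R p i) \<in> P nu"
proof -
  have "\<forall>i\<in>I. \<exists>t. p i = (\<Sum>w\<in>Wg. t w *\<^sub>R w nu) \<and> (\<forall>w\<in>Wg. t w \<in> \<rat> \<and> 0 \<le> t w) \<and> sum t Wg = 1"
    using p unfolding P_def by blast
  from bchoice[OF this] obtain T where T: "\<forall>i\<in>I. p i = (\<Sum>w\<in>Wg. T i w *\<^sub>R w nu) \<and> (\<forall>w\<in>Wg. T i w \<in> \<rat> \<and> 0 \<le> T i w) \<and> sum (T i) Wg = 1"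
    by blast
  define t where "t w = (\<Sum>i\<in>I. c i * T i w)" for w
  have "(\<Sum>i\<in>I. c i *\<^sub>R p i) = (\<Sum>i\<in>I. \<Sum>w\<in>Wg. (c i * T i w) *\<^sub>R w nu)"
    using T by (intro sum.cong) (auto simp: scaleR_sum_right)
  also have "\<dots> = (\<Sum>w\<in>Wg. t w *\<^sub>R w nu)"
    unfolding t_def by (subst sum.swap) (simp add: scaleR_sum_left)
  finally have e: "(\<Sum>i\<in>I. c i *\<^sub>R p i) = (\<Sum>w\<in>Wg. t w *\<^sub>R w nu)" .
  have tq: "\<forall>w\<in>Wg. t w \<in> \<rat> \<and> 0 \<le> t w"
    using c T unfolding t_def by (auto intro!: Rats_sum Rats_mult sum_nonneg)
  have "sum t Wg = (\<Sum>i\<in>I. c i * sum (T i) Wg)"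
    unfolding t_def by (subst sum.swap) (simp add: sum_distrib_left)
  also have "\<dots> = 1" using T c(2) by simp
  finally show ?thesis unfolding P_def using e tq by blast
qed

lemma P_comb2:
  assumes "p \<in> P nu" "q \<in> P nu" "th \<in> \<rat>" "0 \<le> th" "th \<le> 1"
  shows "(1 - th) *\<^sub>R p + th *\<^sub>R q \<in> P nu"
proof -
  let ?c = "\<lambda>i::bool. if i then th else 1 - th"
  let ?p = "\<lambda>i::bool. if i then q else p"
  have "(\<Sum>i\<in>UNIV. ?c i *\<^sub>R ?p i) \<in> P nu"
    using assms by (intro P_comb) (auto simp: UNIV_bool)
  then show ?thesis by (simp add: UNIV_bool)
qed

lemma P_W: assumes "v \<in> Wg" "x \<in> P nu" shows "v x \<in> P nu"
proof -
  obtain t where t: "x = (\<Sum>w\<in>Wg. t w *\<^sub>R w nu)" "\<forall>w\<in>Wg. t w \<in> \<rat> \<and> 0 \<le> t w" "sum t Wg = 1"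
    using assms(2) unfolding P_def by blast
  have lin: "linear v" using W_linear[OF assms(1)] .
  have "v x = (\<Sum>w\<in>Wg. t w *\<^sub>R (v \<circ> w) nu)" unfolding t(1)
    by (simp add: linear_sum[OF lin] linear_scale[OF lin])
  also have "\<dots> \<in> P nu" using t finW W_comp[OF assms(1)] by (intro P_comb ballI P_orbit) (auto simp del: o_apply)
  finally show ?thesis .
qed

lemma P_shift: assumes "z \<in> Zsp Del" "x \<in> P nu" shows "z + x \<in> P (z + nu)"
proof -
  obtain t where t: "x = (\<Sum>w\<in>Wg. t w *\<^sub>R w nu)" "\<forall>w\<in>Wg. t w \<in> \<rat> \<and> 0 \<le> t w" "sum t Wg = 1"
    using assms(2) unfolding P_def by blast
  have "z + x = (\<Sum>w\<in>Wg. t w *\<^sub>R (z + w nu))" unfolding t(1) by (rule sum_shift[OF t(3)])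
  also have "\<dots> = (\<Sum>w\<in>Wg. t w *\<^sub>R w (z + nu))"
    by (intro sum.cong refl) (simp add: linear_add[OF W_linear] fix_W[OF _ assms(1)])
  finally show ?thesis unfolding P_def using t by blast
qed

end

context rsysf
begin

lemma K:
  assumes l: "l \<in> fdom Del \<inter> weights Del" and mu: "mu \<in> fdom Del \<inter> weights Del"
    and v: "v \<in> Wg"
  shows "l + v mu \<in> P (l + mu)"
  using v
proof (induction "card {y \<in> (\<lambda>w. w mu) ` Wg. v mu \<bullet> rho < y \<bullet> rho}" arbitrary: v rule: less_induct)
  case less
  show ?case
  proof (cases "v mu \<in> fdom Del")
    case True
    then have "v mu = mu" using dom_unique less(2) mu by auto
    then show ?thesis using P_orbit[OF W_id, of "l + mu"] by simp
  next
    case False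
    then obtain a where a: "a \<in> Del" "v mu \<bullet> a < 0" by (auto simp: fdom_def not_le)
    have aP: "a \<in> Phi" using a subD by blast
    have anz: "a \<noteq> 0" using nzD[OF a(1)] .
    have aa: "a \<bullet> a > 0" using anz by simp
    define v' where "v' = refl a \<circ> v"
    have v'W: "v' \<in> Wg" using W_comp[OF W_refl[OF aP] less(2)] v'_def by simp
    have y': "v' mu = refl a (v mu)" by (simp add: v'_def)
    have "v' mu \<bullet> rho = v mu \<bullet> rho - 2 * (v mu \<bullet> a) / (a \<bullet> a)"
      using rho[OF a(1)] by (simp add: y' refl_def inner_diff_left)
    moreover have "2 * (v mu \<bullet> a) / (a \<bullet> a) < 0" using a(2) aa by (simp add: divide_neg_pos)
    ultimately have lt: "v mu \<bullet> rho < v' mu \<bullet> rho" by simp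
    have mem: "v' mu \<in> (\<lambda>w. w mu) ` Wg" using v'W by (rule imageI)
    have "{y \<in> (\<lambda>w. w mu) ` Wg. v' mu \<bullet> rho < y \<bullet> rho} \<subset> {y \<in> (\<lambda>w. w mu) ` Wg. v mu \<bullet> rho < y \<bullet> rho}"
      using lt mem by auto
    then have "card {y \<in> (\<lambda>w. w mu) ` Wg. v' mu \<bullet> rho < y \<bullet> rho} < card {y \<in> (\<lambda>w. w mu) ` Wg. v mu \<bullet> rho < y \<bullet> rho}"
      by (rule psubset_card_mono[rotated]) (simp add: finW)
    from less(1)[OF this v'W] have IH: "l + v' mu \<in> P (l + mu)" .
    have R: "refl a (l + v' mu) \<in> P (l + mu)" by (rule P_W[OF W_refl[OF aP] IH])
    define c where "c = cpair (v' mu) a"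
    define A where "A = cpair l a"
    have "cpair (v mu) a < 0" using a(2) aa by (simp add: cpair_def divide_neg_pos)
    then have cpos: "c > 0" unfolding c_def y' using cpair_refl_self[OF anz] by simp
    have Apos: "A \<ge> 0" using l a(1) aa by (simp add: A_def cpair_def fdom_def)
    have cint: "c \<in> \<int>" using weights_W[OF v'W] mu a(1) by (simp add: c_def weights_def)
    have Aint: "A \<in> \<int>" using l a(1) by (simp add: A_def weights_def)
    have e1: "refl a (l + v' mu) = l + v' mu - (A + c) *\<^sub>R a"
      by (simp add: refl_cpair cpair_add A_def c_def)
    have "v mu = refl a (v' mu)" using refl_refl[OF anz] y' by simp
    then have e2: "l + v mu = l + v' mu - c *\<^sub>R a" by (simp add: refl_cpair c_def)
    define th where "th = c / (A + c)"
    have thq: "th \<in> \<rat>" unfolding th_def using cint Aint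
      by (intro Rats_divide) (auto intro: Ints_subset_Rats[THEN subsetD])
    have th0: "0 \<le> th" "th \<le> 1" using cpos Apos by (auto simp: th_def)
    have "th * (A + c) = c" using cpos Apos by (simp add: th_def)
    moreover have "(1 - th) *\<^sub>R (l + v' mu) + th *\<^sub>R (l + v' mu - (A + c) *\<^sub>R a)
        = l + v' mu - (th * (A + c)) *\<^sub>R a"
      by (simp add: algebra_simps)
    ultimately have "(1 - th) *\<^sub>R (l + v' mu) + th *\<^sub>R refl a (l + v' mu) = l + v mu"
      unfolding e1 e2 by simp
    with P_comb2[OF IH R thq th0] show ?thesis by simp
  qed
qed

lemma mink:
  assumes l: "l \<in> fdom Del \<inter> weights Del" and mu: "mu \<in> fdom Del \<inter> weights Del"
    and x1: "x1 \<in> P l" and x2: "x2 \<in> P mu"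
  shows "x1 + x2 \<in> P (l + mu)"
proof -
  obtain t1 where t1: "x1 = (\<Sum>w\<in>Wg. t1 w *\<^sub>R w l)" "\<forall>w\<in>Wg. t1 w \<in> \<rat> \<and> 0 \<le> t1 w" "sum t1 Wg = 1"
    using x1 unfolding P_def by blast
  obtain t2 where t2: "x2 = (\<Sum>w\<in>Wg. t2 w *\<^sub>R w mu)" "\<forall>w\<in>Wg. t2 w \<in> \<rat> \<and> 0 \<le> t2 w" "sum t2 Wg = 1"
    using x2 unfolding P_def by blast
  have step: "w l + x2 \<in> P (l + mu)" if w: "w \<in> Wg" for w
  proof -
    obtain w' where w': "w' \<in> Wg" "\<forall>x. w' (w x) = x" "\<forall>x. w (w' x) = x" using W_inv[OF w] by blast
    have wv: "w l + v mu \<in> P (l + mu)" if v: "v \<in> Wg" for v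
    proof -
      have "l + (w' \<circ> v) mu \<in> P (l + mu)" by (rule K[OF l mu W_comp[OF w'(1) v]])
      then have "w (l + (w' \<circ> v) mu) \<in> P (l + mu)" by (rule P_W[OF w])
      moreover have "w (l + (w' \<circ> v) mu) = w l + v mu"
        using linear_add[OF W_linear[OF w]] w'(3) by simp
      ultimately show ?thesis by simp
    qed
    have "w l + x2 = (\<Sum>v\<in>Wg. t2 v *\<^sub>R (w l + v mu))" unfolding t2(1) by (rule sum_shift[OF t2(3)])
    also have "\<dots> \<in> P (l + mu)" by (rule P_comb[OF finW t2(2) t2(3)]) (use wv in blast)
    finally show ?thesis .
  qed
  have "x1 + x2 = x2 + x1" by simp
  also have "\<dots> = (\<Sum>w\<in>Wg. t1 w *\<^sub>R (x2 + w l))" unfolding t1(1) by (rule sum_shift[OF t1(3)])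
  also have "\<dots> = (\<Sum>w\<in>Wg. t1 w *\<^sub>R (w l + x2))" by (simp add: add.commute)
  also have "\<dots> \<in> P (l + mu)" by (rule P_comb[OF finW t1(2) t1(3)]) (use step in blast)
  finally show ?thesis .
qed

lemma fw_unique:
  assumes "l1 \<in> span Del" "l2 \<in> span Del" "\<forall>b\<in>Del. cpair l1 b = cpair l2 b"
  shows "l1 = l2"
proof -
  have "(l1 - l2) \<bullet> b = 0" if "b \<in> Del" for b
  proof -
    have "b \<bullet> b \<noteq> 0" using nzD[OF that] by simp
    then have "l1 \<bullet> b = l2 \<bullet> b" using assms(3) that nzD[OF that] by (auto simp: cpair_def)
    then show ?thesis by (simp add: inner_diff_left)
  qed
  then have "orthogonal (l1 - l2) (l1 - l2)"
    using orthogonal_to_span[of "l1 - l2" Del "l1 - l2"] span_diff[OF assms(1,2)]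
    by (simp add: orthogonal_def)
  then show ?thesis by (simp add: orthogonal_def)
qed

lemma fw:
  assumes a: "a \<in> Del"
  shows "fund_weight Del a \<in> span Del \<and> (\<forall>b\<in>Del. cpair (fund_weight Del a) b = (if b = a then 1 else 0))"
proof -
  obtain l where l: "l \<in> span Del" "\<forall>b\<in>Del. l \<bullet> b = (if b = a then (b \<bullet> b) / 2 else 0)"
    using exists_dual[OF indD, of "\<lambda>b. if b = a then (b \<bullet> b) / 2 else 0"] by blast
  have lc: "\<forall>b\<in>Del. cpair l b = (if b = a then 1 else 0)"
  proof
    fix b assume b: "b \<in> Del"
    have "b \<bullet> b \<noteq> 0" using nzD[OF b] by simp
    then show "cpair l b = (if b = a then 1 else 0)" using l(2) b by (simp add: cpair_def)
  qed
  have "\<exists>!l. l \<in> span Del \<and> (\<forall>b\<in>Del. cpair l b = (if b = a then 1 else 0))"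
  proof (rule ex1I[of _ l])
    show "l \<in> span Del \<and> (\<forall>b\<in>Del. cpair l b = (if b = a then 1 else 0))" using l(1) lc by blast
  next
    fix y assume "y \<in> span Del \<and> (\<forall>b\<in>Del. cpair y b = (if b = a then 1 else 0))"
    then show "y = l" using fw_unique[of y l] l(1) lc by auto
  qed
  from theI'[OF this] show ?thesis unfolding fund_weight_def .
qed

lemma fw_dom: assumes a: "a \<in> Del" shows "fund_weight Del a \<in> fdom Del \<inter> weights Del"
proof -
  have c: "\<forall>b\<in>Del. cpair (fund_weight Del a) b = (if b = a then 1 else 0)" using fw[OF a] by blast
  have "fund_weight Del a \<bullet> b \<ge> 0" if "b \<in> Del" for b
  proof -
    have bb: "b \<bullet> b > 0" using nzD[OF that] by simp
    have "cpair (fund_weight Del a) b \<ge> 0" using c that by simp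
    then show ?thesis using bb by (simp add: cpair_def zero_le_divide_iff)
  qed
  moreover have "cpair (fund_weight Del a) b \<in> \<int>" if "b \<in> Del" for b using c that by simp
  ultimately show ?thesis by (auto simp: fdom_def weights_def)
qed

end

lemma cpair_inner: "cpair x b = x \<bullet> ((2 / (b \<bullet> b)) *\<^sub>R b)"
  by (simp add: cpair_def)

lemma lookup_ofint_mult: "Poly_Mapping.lookup (of_int k * (p :: 'a::monoid_add \<Rightarrow>\<^sub>0 int)) y = k * Poly_Mapping.lookup p y"
proof -
  have "of_int k * p = Poly_Mapping.map ((*) k) p"
    by (simp add: mult_map_scale_conv_mult single_of_int[symmetric] del: single_of_int)
  then show ?thesis by (simp add: Poly_Mapping.map.rep_eq when_def)
qed

lemma cpair_sum: "cpair (sum f A) b = (\<Sum>a\<in>A. cpair (f a) b)"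
  by (simp add: cpair_def inner_sum_left sum_divide_distrib sum_distrib_left)

lemma cpair_scale: "cpair (c *\<^sub>R x) b = c * cpair x b"
  by (simp add: cpair_inner)

lemma cpair_diff: "cpair (x - y) b = cpair x b - cpair y b"
  by (simp add: cpair_def inner_diff_left diff_divide_distrib)

lemma nat_floor_Ints: "x \<in> \<int> \<Longrightarrow> 0 \<le> x \<Longrightarrow> real (nat \<lfloor>x\<rfloor>) = x"
  by (auto elim!: Ints_cases)

context rsysf
begin

definition Pp :: "'a \<Rightarrow> 'a set" where "Pp nu = {x \<in> P nu. nu - x \<in> Zl}"

abbreviation DW where "DW \<equiv> fdom Del \<inter> weights Del"

lemma DW_add: "x \<in> DW \<Longrightarrow> y \<in> DW \<Longrightarrow> x + y \<in> DW"
  by (auto simp: fdom_def weights_def inner_add_left cpair_add intro!: Ints_add add_nonneg_nonneg)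

lemma DW_zero: "0 \<in> DW"
  by (auto simp: fdom_def weights_def cpair_def)

lemma DW_scale: "x \<in> DW \<Longrightarrow> real n *\<^sub>R x \<in> DW"
  by (auto simp: fdom_def weights_def cpair_scale intro!: Ints_mult)

lemma DW_sum: "finite A \<Longrightarrow> (\<forall>a\<in>A. f a \<in> DW) \<Longrightarrow> sum f A \<in> DW"
proof (induction A rule: finite_induct)
  case empty then show ?case using DW_zero by simp
next
  case (insert x F) then show ?case using DW_add[of "f x" "sum f F"] by simp
qed

lemma Pp_mult:
  assumes "l \<in> DW" "mu \<in> DW" "Poly_Mapping.keys p \<subseteq> Pp l" "Poly_Mapping.keys q \<subseteq> Pp mu"
  shows "Poly_Mapping.keys (p * q) \<subseteq> Pp (l + mu)"
proof
  fix x assume "x \<in> Poly_Mapping.keys (p * q)"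
  then obtain a b where ab: "x = a + b" "a \<in> Poly_Mapping.keys p" "b \<in> Poly_Mapping.keys q" using keys_mult by blast
  have a: "a \<in> P l" "l - a \<in> Zl" and b: "b \<in> P mu" "mu - b \<in> Zl" using ab assms(3,4) by (auto simp: Pp_def)
  have "x \<in> P (l + mu)" using mink[OF assms(1,2) a(1) b(1)] ab(1) by simp
  moreover have eqx: "(l + mu) - x = (l - a) + (mu - b)" using ab(1) by simp
  have "(l + mu) - x \<in> Zl" unfolding eqx by (rule Zl_add[OF a(2) b(2)])
  ultimately show "x \<in> Pp (l + mu)" by (simp add: Pp_def)
qed

lemma Pp_one: "Poly_Mapping.keys (1 :: 'a \<Rightarrow>\<^sub>0 int) \<subseteq> Pp 0"
  using P_orbit[OF W_id, of 0] Zl_zero by (simp add: Pp_def)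

lemma Pp_pow: "l \<in> DW \<Longrightarrow> Poly_Mapping.keys p \<subseteq> Pp l \<Longrightarrow> Poly_Mapping.keys ((p :: 'a \<Rightarrow>\<^sub>0 int) ^ n) \<subseteq> Pp (real n *\<^sub>R l)"
proof (induction n)
  case 0 then show ?case using Pp_one by simp
next
  case (Suc n)
  have "Poly_Mapping.keys (p * p ^ n) \<subseteq> Pp (l + real n *\<^sub>R l)"
    using Suc by (intro Pp_mult DW_scale) auto
  then show ?case by (simp add: scaleR_add_left algebra_simps)
qed

lemma Pp_orbsum: assumes "l \<in> DW" shows "Poly_Mapping.keys (orbsum Wg l) \<subseteq> Pp l"
proof
  fix x assume "x \<in> Poly_Mapping.keys (orbsum Wg l)"
  then have "x \<in> (\<lambda>w. w l) ` Wg" unfolding orbsum_def chi_def using keys_sum by fastforce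
  then obtain w where w: "w \<in> Wg" "x = w l" by blast
  show "x \<in> Pp l" using P_orbit[OF w(1)] diff_W_Zl[OF w(1)] assms w(2) by (simp add: Pp_def)
qed

lemma Pp_prod:
  "finite A \<Longrightarrow> A \<subseteq> Del \<Longrightarrow>
    Poly_Mapping.keys (\<Prod>a\<in>A. orbsum Wg (fund_weight Del a) ^ n a) \<subseteq> Pp (\<Sum>a\<in>A. real (n a) *\<^sub>R fund_weight Del a)"
proof (induction A rule: finite_induct)
  case empty then show ?case using Pp_one by simp
next
  case (insert a A)
  have a: "a \<in> Del" and A: "A \<subseteq> Del" using insert by auto
  have d1: "real (n a) *\<^sub>R fund_weight Del a \<in> DW" using fw_dom[OF a] by (rule DW_scale)
  have d2: "(\<Sum>a\<in>A. real (n a) *\<^sub>R fund_weight Del a) \<in> DW"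
    using insert(1) A fw_dom DW_scale by (intro DW_sum) auto
  have "Poly_Mapping.keys (orbsum Wg (fund_weight Del a) ^ n a * (\<Prod>a\<in>A. orbsum Wg (fund_weight Del a) ^ n a))
     \<subseteq> Pp (real (n a) *\<^sub>R fund_weight Del a + (\<Sum>a\<in>A. real (n a) *\<^sub>R fund_weight Del a))"
    by (rule Pp_mult[OF d1 d2 Pp_pow[OF fw_dom[OF a] Pp_orbsum[OF fw_dom[OF a]]] insert(3)[OF A]])
  then show ?case using insert(1,2) by simp
qed


lemma Psi_z:
  assumes u: "u \<in> DW"
  shows "u - (\<Sum>a\<in>Del. real (nat \<lfloor>cpair u a\<rfloor>) *\<^sub>R fund_weight Del a) \<in> Zsp Del"
proof -
  have "(u - (\<Sum>a\<in>Del. real (nat \<lfloor>cpair u a\<rfloor>) *\<^sub>R fund_weight Del a)) \<bullet> b = 0" if b: "b \<in> Del" for b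
  proof -
    have c: "cpair (fund_weight Del a) b = (if b = a then 1 else 0)" if "a \<in> Del" for a
      using fw[OF that] b by blast
    have "(\<Sum>a\<in>Del. real (nat \<lfloor>cpair u a\<rfloor>) * cpair (fund_weight Del a) b)
        = (\<Sum>a\<in>Del. if a = b then real (nat \<lfloor>cpair u b\<rfloor>) else 0)"
      by (rule sum.cong) (auto simp: c)
    also have "\<dots> = real (nat \<lfloor>cpair u b\<rfloor>)" using b finD by simp
    also have "\<dots> = cpair u b"
    proof (rule nat_floor_Ints)
      show "cpair u b \<in> \<int>" using u b by (simp add: weights_def)
      have "b \<bullet> b > 0" using nzD[OF b] by simp
      then show "0 \<le> cpair u b" using u b by (simp add: fdom_def cpair_def)
    qed
    finally have "cpair (u - (\<Sum>a\<in>Del. real (nat \<lfloor>cpair u a\<rfloor>) *\<^sub>R fund_weight Del a)) b = 0"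
      by (simp add: cpair_diff cpair_sum cpair_scale)
    moreover have "b \<bullet> b \<noteq> 0" using nzD[OF b] by simp
    ultimately show ?thesis by (simp add: cpair_def)
  qed
  then show ?thesis by (simp add: Zsp_def)
qed

lemma Psi_keys: assumes u: "u \<in> DW" shows "Poly_Mapping.keys (Psi Wg Del u) \<subseteq> Pp u"
proof -
  define n where "n = (\<lambda>a. nat \<lfloor>cpair u a\<rfloor>)"
  define nu where "nu = (\<Sum>a\<in>Del. real (n a) *\<^sub>R fund_weight Del a)"
  define z where "z = u - nu"
  define Q where "Q = (\<Prod>a\<in>Del. orbsum Wg (fund_weight Del a) ^ n a)"
  have z: "z \<in> Zsp Del" using Psi_z[OF u] by (simp add: z_def nu_def n_def)
  have Q: "Poly_Mapping.keys Q \<subseteq> Pp nu" unfolding Q_def nu_def by (rule Pp_prod[OF finD subset_refl])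
  have eq: "Psi Wg Del u = chi z * Q" by (simp add: Psi_def Let_def n_def nu_def z_def Q_def)
  show ?thesis
  proof
    fix x assume "x \<in> Poly_Mapping.keys (Psi Wg Del u)"
    then obtain b where b: "x = z + b" "b \<in> Poly_Mapping.keys Q" using keys_mult[of "chi z" Q] eq
      by (auto simp: chi_def)
    have "b \<in> P nu" "nu - b \<in> Zl" using Q b(2) by (auto simp: Pp_def)
    then have "x \<in> P (z + nu)" "(z + nu) - x \<in> Zl" using P_shift[OF z] b(1) by auto
    then show "x \<in> Pp u" by (simp add: Pp_def z_def)
  qed
qed

end

context rsysf
begin

definition Inv :: "('a \<Rightarrow>\<^sub>0 int) \<Rightarrow> bool" where
  "Inv p \<longleftrightarrow> (\<forall>w\<in>Wg. \<forall>x. Poly_Mapping.lookup p (w x) = Poly_Mapping.lookup p x)"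

lemma W_bij: assumes "w \<in> Wg" shows "bij w"
proof -
  obtain v where v: "v \<in> Wg" "\<forall>x. v (w x) = x" "\<forall>x. w (v x) = x" using W_inv[OF assms] by blast
  show ?thesis by (rule o_bij[of v]) (use v in \<open>auto simp: fun_eq_iff\<close>)
qed

lemma W_inj_eq: "w \<in> Wg \<Longrightarrow> w x = w y \<longleftrightarrow> x = y"
  using W_bij bij_is_inj inj_eq by metis

lemma Inv_mult: assumes "Inv p" "Inv q" shows "Inv (p * q)"
  unfolding Inv_def
proof (intro ballI allI)
  fix w x assume w: "w \<in> Wg"
  have b: "bij w" using W_bij[OF w] .
  have lin: "linear w" using W_linear[OF w] .
  have inner: "(\<Sum>r. Poly_Mapping.lookup q r when w x = w l + r) = (\<Sum>r. Poly_Mapping.lookup q r when x = l + r)" for l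
  proof -
    have "(\<Sum>r. Poly_Mapping.lookup q r when w x = w l + r) = (\<Sum>r. Poly_Mapping.lookup q (w r) when w x = w l + w r)"
      by (rule Sum_any.reindex_cong[OF b]) (simp add: fun_eq_iff)
    also have "\<dots> = (\<Sum>r. Poly_Mapping.lookup q r when x = l + r)"
    proof (rule Sum_any.cong)
      fix r
      have "w x = w l + w r \<longleftrightarrow> x = l + r" using linear_add[OF lin, of l r] W_inj_eq[OF w, of x "l + r"] by simp
      then show "(Poly_Mapping.lookup q (w r) when w x = w l + w r) = (Poly_Mapping.lookup q r when x = l + r)"
        using assms(2) w unfolding Inv_def by simp
    qed
    finally show ?thesis .
  qed
  have "Poly_Mapping.lookup (p * q) (w x) = (\<Sum>l. Poly_Mapping.lookup p l * (\<Sum>r. Poly_Mapping.lookup q r when w x = l + r))"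
    by (rule lookup_mult)
  also have "\<dots> = (\<Sum>l. Poly_Mapping.lookup p (w l) * (\<Sum>r. Poly_Mapping.lookup q r when w x = w l + r))"
    by (rule Sum_any.reindex_cong[OF b]) (simp add: fun_eq_iff)
  also have "\<dots> = (\<Sum>l. Poly_Mapping.lookup p l * (\<Sum>r. Poly_Mapping.lookup q r when x = l + r))"
    using assms(1) w inner unfolding Inv_def by simp
  also have "\<dots> = Poly_Mapping.lookup (p * q) x" by (rule lookup_mult[symmetric])
  finally show "Poly_Mapping.lookup (p * q) (w x) = Poly_Mapping.lookup (p * q) x" .
qed

lemma Inv_one: "Inv 1"
  unfolding Inv_def
proof (intro ballI allI)
  fix w x assume w: "w \<in> Wg"
  have "w x = 0 \<longleftrightarrow> x = 0" using W_inj_eq[OF w, of x 0] linear_0[OF W_linear[OF w]] by simp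
  then show "Poly_Mapping.lookup 1 (w x) = Poly_Mapping.lookup 1 x" by (simp add: lookup_one)
qed

lemma Inv_pow: "Inv p \<Longrightarrow> Inv (p ^ n)"
  by (induction n) (auto simp: Inv_one Inv_mult)

lemma Inv_prod: "\<forall>a\<in>A. Inv (f a) \<Longrightarrow> Inv (prod f A)"
proof (cases "finite A")
  case True
  assume "\<forall>a\<in>A. Inv (f a)"
  with True show ?thesis by (induction A rule: finite_induct) (auto simp: Inv_one Inv_mult)
qed (simp add: Inv_one)

lemma Inv_add: "Inv p \<Longrightarrow> Inv q \<Longrightarrow> Inv (p + q)"
  unfolding Inv_def by (simp add: lookup_add)

lemma Inv_zero: "Inv 0"
  unfolding Inv_def by simp

lemma Inv_sum: "\<forall>a\<in>A. Inv (f a) \<Longrightarrow> Inv (sum f A)"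
proof (cases "finite A")
  case True
  assume "\<forall>a\<in>A. Inv (f a)"
  with True show ?thesis by (induction A rule: finite_induct) (auto simp: Inv_zero Inv_add)
qed (simp add: Inv_zero)

lemma Inv_ofint: "Inv p \<Longrightarrow> Inv (of_int k * p)"
  unfolding Inv_def by (simp add: lookup_ofint_mult)

lemma Inv_chi: assumes "z \<in> Zsp Del" shows "Inv (chi z)"
  unfolding Inv_def chi_def
proof (intro ballI allI)
  fix w x assume w: "w \<in> Wg"
  have "z = w x \<longleftrightarrow> z = x" using W_inj_eq[OF w, of z x] fix_W[OF w assms] by auto
  then show "Poly_Mapping.lookup (Poly_Mapping.single z 1) (w x) = Poly_Mapping.lookup (Poly_Mapping.single z 1) x"
    by (simp add: lookup_single)
qed

lemma lookup_orbsum: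
  "Poly_Mapping.lookup (orbsum Wg l) y = (if y \<in> (\<lambda>w. w l) ` Wg then 1 else 0)"
proof -
  have "Poly_Mapping.lookup (orbsum Wg l) y = (\<Sum>x\<in>(\<lambda>w. w l) ` Wg. (if x = y then 1 else 0))"
    unfolding orbsum_def chi_def lookup_sum by (intro sum.cong refl) (simp add: lookup_single when_def)
  also have "\<dots> = (if y \<in> (\<lambda>w. w l) ` Wg then 1 else 0)" using finW by (simp add: sum.delta')
  finally show ?thesis .
qed

lemma Inv_orbsum: "Inv (orbsum Wg l)"
  unfolding Inv_def lookup_orbsum
proof (intro ballI allI)
  fix w x assume w: "w \<in> Wg"
  obtain v where v: "v \<in> Wg" "\<forall>x. v (w x) = x" "\<forall>x. w (v x) = x" using W_inv[OF w] by blast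
  have "w x \<in> (\<lambda>w. w l) ` Wg \<longleftrightarrow> x \<in> (\<lambda>w. w l) ` Wg"
  proof
    assume "w x \<in> (\<lambda>w. w l) ` Wg"
    then obtain u where u: "u \<in> Wg" "w x = u l" by blast
    then have "x = (v \<circ> u) l" using v(2) by (metis comp_apply)
    then show "x \<in> (\<lambda>w. w l) ` Wg" using W_comp[OF v(1) u(1)] by blast
  next
    assume "x \<in> (\<lambda>w. w l) ` Wg"
    then obtain u where u: "u \<in> Wg" "x = u l" by blast
    then have "w x = (w \<circ> u) l" by simp
    then show "w x \<in> (\<lambda>w. w l) ` Wg" using W_comp[OF w u(1)] by blast
  qed
  then show "(if w x \<in> (\<lambda>w. w l) ` Wg then 1 else 0) = (if x \<in> (\<lambda>w. w l) ` Wg then 1 else (0::int))"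
    by simp
qed

lemma Psi_Inv: assumes u: "u \<in> DW" shows "Inv (Psi Wg Del u)"
proof -
  have z: "u - (\<Sum>a\<in>Del. real (nat \<lfloor>cpair u a\<rfloor>) *\<^sub>R fund_weight Del a) \<in> Zsp Del"
    by (rule Psi_z[OF u])
  show ?thesis unfolding Psi_def Let_def
    by (intro Inv_mult Inv_chi[OF z] Inv_prod ballI Inv_pow Inv_orbsum)
qed

lemma orb_lookup:
  assumes B: "finite B" "B \<subseteq> fdom Del" and d: "d \<in> fdom Del"
  shows "Poly_Mapping.lookup (\<Sum>v\<in>B. of_int (b v) * orbsum Wg v) d = (if d \<in> B then b d else 0)"
proof -
  have "Poly_Mapping.lookup (\<Sum>v\<in>B. of_int (b v) * orbsum Wg v) d
      = (\<Sum>v\<in>B. b v * (if d \<in> (\<lambda>w. w v) ` Wg then 1 else 0))"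
    by (simp add: lookup_sum lookup_ofint_mult lookup_orbsum)
  also have "\<dots> = (\<Sum>v\<in>B. if v = d then b v else 0)"
  proof (rule sum.cong[OF refl])
    fix v assume v: "v \<in> B"
    have "d \<in> (\<lambda>w. w v) ` Wg \<longleftrightarrow> v = d"
    proof
      assume "d \<in> (\<lambda>w. w v) ` Wg"
      then obtain w where w: "w \<in> Wg" "d = w v" by blast
      moreover have "v \<in> fdom Del" using B(2) v by blast
      ultimately show "v = d" using dom_unique[OF w(1), of v] d w(2) by simp
    next
      assume "v = d"
      have "id v \<in> (\<lambda>w. w v) ` Wg" using W_id by (rule imageI)
      then show "d \<in> (\<lambda>w. w v) ` Wg" using \<open>v = d\<close> by simp
    qed
    then show "b v * (if d \<in> (\<lambda>w. w v) ` Wg then 1 else 0) = (if v = d then b v else 0)" by simp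
  qed
  also have "\<dots> = (if d \<in> B then b d else 0)" using B(1) by (simp add: sum.delta')
  finally show ?thesis .
qed

lemma orb_coeffs_eq:
  assumes f: "Inv f" "Poly_Mapping.keys f \<subseteq> weights Del"
  shows "orb_coeffs Wg Del f = (\<lambda>v. if v \<in> DW then Poly_Mapping.lookup f v else 0)"
proof -
  define a where "a = (\<lambda>v. if v \<in> DW then Poly_Mapping.lookup f v else 0)"
  let ?Q = "\<lambda>b. finite {v. b v \<noteq> 0} \<and> (\<forall>v. b v \<noteq> 0 \<longrightarrow> v \<in> fdom Del \<inter> weights Del) \<and>
      f = (\<Sum>v\<in>{v. b v \<noteq> 0}. of_int (b v) * orbsum Wg v)"
  have Qa: "?Q a"
  proof (intro conjI)
    have "{v. a v \<noteq> 0} \<subseteq> Poly_Mapping.keys f" by (auto simp: a_def in_keys_iff)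
    then show fin: "finite {v. a v \<noteq> 0}" using finite_keys finite_subset by blast
    show supp: "\<forall>v. a v \<noteq> 0 \<longrightarrow> v \<in> fdom Del \<inter> weights Del" by (auto simp: a_def split: if_splits)
    show "f = (\<Sum>v\<in>{v. a v \<noteq> 0}. of_int (a v) * orbsum Wg v)"
    proof (rule poly_mapping_eqI)
      fix y
      let ?R = "(\<Sum>v\<in>{v. a v \<noteq> 0}. of_int (a v) * orbsum Wg v)"
      obtain w where w: "w \<in> Wg" "w y \<in> fdom Del" using dom_exists by blast
      have iR: "Inv ?R" by (intro Inv_sum ballI Inv_ofint Inv_orbsum)
      have "Poly_Mapping.lookup ?R y = Poly_Mapping.lookup ?R (w y)" using iR w(1) unfolding Inv_def by simp
      also have "\<dots> = (if w y \<in> {v. a v \<noteq> 0} then a (w y) else 0)"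
        using orb_lookup[OF fin _ w(2)] supp by blast
      also have "\<dots> = Poly_Mapping.lookup f (w y)"
      proof (cases "a (w y) = 0")
        case True
        have "Poly_Mapping.lookup f (w y) = 0"
        proof (rule ccontr)
          assume "Poly_Mapping.lookup f (w y) \<noteq> 0"
          then have "w y \<in> weights Del" using f(2) by (auto simp: in_keys_iff)
          then have "a (w y) = Poly_Mapping.lookup f (w y)" using w(2) by (simp add: a_def)
          then show False using True \<open>Poly_Mapping.lookup f (w y) \<noteq> 0\<close> by simp
        qed
        then show ?thesis using True by simp
      next
        case False
        then show ?thesis by (simp add: a_def split: if_splits)
      qed
      also have "\<dots> = Poly_Mapping.lookup f y" using f(1) w(1) unfolding Inv_def by simp
      finally show "Poly_Mapping.lookup f y = Poly_Mapping.lookup ?R y" by simp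
    qed
  qed
  have uniq: "b = a" if Qb: "?Q b" for b
  proof
    fix v
    show "b v = a v"
    proof (cases "v \<in> DW")
      case True
      have sub: "{v. b v \<noteq> 0} \<subseteq> fdom Del" using Qb by blast
      have "Poly_Mapping.lookup f v = (if v \<in> {v. b v \<noteq> 0} then b v else 0)"
        using Qb orb_lookup[OF _ sub, of v b] True by (metis (no_types, lifting) IntD1)
      then show ?thesis using True by (auto simp: a_def split: if_splits)
    next
      case False
      then show ?thesis using Qb by (auto simp: a_def)
    qed
  qed
  have "orb_coeffs Wg Del f = a" unfolding orb_coeffs_def
    by (rule the_equality[of ?Q a]) (use Qa uniq in blast)+
  then show ?thesis by (simp add: a_def)
qed

end

lemma sg_closed:
  fixes S :: "'a::real_vector set"
  assumes S: "S = {\<Sum>g\<in>G. of_nat (n g) *\<^sub>R g | n. True}"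
  shows sg_zero: "0 \<in> S"
    and sg_add: "x \<in> S \<Longrightarrow> y \<in> S \<Longrightarrow> x + y \<in> S"
    and sg_scale: "x \<in> S \<Longrightarrow> of_nat m *\<^sub>R x \<in> S"
proof -
  have "(\<Sum>g\<in>G. of_nat ((\<lambda>_. 0::nat) g) *\<^sub>R g) = 0" by (rule sum.neutral) simp
  then show "0 \<in> S" unfolding S by (intro CollectI exI[of _ "\<lambda>_. 0::nat"]) simp
  show "x \<in> S \<Longrightarrow> y \<in> S \<Longrightarrow> x + y \<in> S"
    unfolding S
    apply clarify
    subgoal for n1 n2 by (rule exI[of _ "\<lambda>g. n1 g + n2 g"]) (simp add: scaleR_add_left sum.distrib)
    done
  show "x \<in> S \<Longrightarrow> of_nat m *\<^sub>R x \<in> S"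
    unfolding S
    apply clarify
    subgoal for n1 by (rule exI[of _ "\<lambda>g. m * n1 g"]) (simp add: scaleR_sum_right)
    done
qed

lemma sg_sum:
  fixes S :: "'a::real_vector set"
  assumes S: "S = {\<Sum>g\<in>G. of_nat (n g) *\<^sub>R g | n. True}"
  shows "finite I \<Longrightarrow> \<forall>i\<in>I. p i \<in> S \<Longrightarrow> (\<Sum>i\<in>I. of_nat (m i) *\<^sub>R p i) \<in> S"
proof (induction I rule: finite_induct)
  case empty then show ?case using sg_zero[OF S] by simp
next
  case (insert i I)
  then show ?case using sg_add[OF S] sg_scale[OF S] by simp
qed

lemma lat_closed:
  fixes M :: "'a::real_vector set"
  assumes M: "M = {\<Sum>b\<in>B. of_int (c b) *\<^sub>R b | c. True}"
  shows lat_zero: "0 \<in> M"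
    and lat_add: "x \<in> M \<Longrightarrow> y \<in> M \<Longrightarrow> x + y \<in> M"
    and lat_scale: "x \<in> M \<Longrightarrow> of_int k *\<^sub>R x \<in> M"
proof -
  have "(\<Sum>g\<in>B. of_int ((\<lambda>_. 0::int) g) *\<^sub>R g) = 0" by (rule sum.neutral) simp
  then show "0 \<in> M" unfolding M by (intro CollectI exI[of _ "\<lambda>_. 0::int"]) simp
  show "x \<in> M \<Longrightarrow> y \<in> M \<Longrightarrow> x + y \<in> M"
    unfolding M
    apply clarify
    subgoal for n1 n2 by (rule exI[of _ "\<lambda>g. n1 g + n2 g"]) (simp add: scaleR_add_left sum.distrib)
    done
  show "x \<in> M \<Longrightarrow> of_int k *\<^sub>R x \<in> M"
    unfolding M
    apply clarify
    subgoal for n1 by (rule exI[of _ "\<lambda>g. k * n1 g"]) (simp add: scaleR_sum_right)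
    done
qed

lemma lat_diff:
  fixes M :: "'a::real_vector set"
  assumes M: "M = {\<Sum>b\<in>B. of_int (c b) *\<^sub>R b | c. True}"
  shows "x \<in> M \<Longrightarrow> y \<in> M \<Longrightarrow> x - y \<in> M"
  using lat_add[OF M, of x "of_int (-1) *\<^sub>R y"] lat_scale[OF M, of y "-1"] by (simp add: scaleR_minus1_left)

lemma lat_sum:
  fixes M :: "'a::real_vector set"
  assumes M: "M = {\<Sum>b\<in>B. of_int (c b) *\<^sub>R b | c. True}"
  shows "finite I \<Longrightarrow> \<forall>i\<in>I. p i \<in> M \<Longrightarrow> (\<Sum>i\<in>I. of_int (m i) *\<^sub>R p i) \<in> M"
proof (induction I rule: finite_induct)
  case empty then show ?case using lat_zero[OF M] by simp
next
  case (insert i I)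
  then show ?case using lat_add[OF M] lat_scale[OF M] by simp
qed

theorem lemma3p3:
  fixes W :: "('a::euclidean_space \<Rightarrow> 'a) set"
    and M S \<Delta> :: "'a set" and u :: 'a
  assumes "lattice M"
    and "finite_reflection_group W"
    and "\<forall>w\<in>W. w ` M \<subseteq> M"
    and "simple_system W \<Delta>"
    and "\<Delta> \<subseteq> M"
    and "M \<subseteq> weights \<Delta>"
    and "saturated_affine_semigroup M S"
    and "\<forall>w\<in>W. w ` S = S"
    and "u \<in> fdom \<Delta> \<inter> S"
  shows "\<forall>v. orb_coeffs W \<Delta> (Psi W \<Delta> u) v \<noteq> 0 \<longrightarrow> v \<in> S"
proof -
  obtain Phi where rs: "root_system W Phi" "\<Delta> \<subseteq> Phi" "independent \<Delta>" "span \<Delta> = span Phi"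
    "\<forall>\<beta>\<in>Phi. \<exists>c. \<beta> = (\<Sum>\<alpha>\<in>\<Delta>. c \<alpha> *\<^sub>R \<alpha>) \<and> ((\<forall>\<alpha>\<in>\<Delta>. c \<alpha> \<ge> 0) \<or> (\<forall>\<alpha>\<in>\<Delta>. c \<alpha> \<le> 0))"
    using assms(4) unfolding simple_system_def by blast
  have rs2: "finite Phi" "0 \<notin> Phi" "\<forall>\<alpha>\<in>Phi. \<forall>c::real. c *\<^sub>R \<alpha> \<in> Phi \<longleftrightarrow> c = 1 \<or> c = -1"
    "\<forall>\<alpha>\<in>Phi. refl \<alpha> ` Phi = Phi" and Wdef: "W = genmon (refl ` Phi)"
    using rs(1) unfolding root_system_def by blast+
  have finW: "finite W" using assms(2) unfolding finite_reflection_group_def by blast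
  have integ: "cpair a b \<in> \<int>" if "a \<in> \<Delta>" "b \<in> \<Delta>" for a b
    using assms(5,6) that unfolding weights_def by blast
  interpret R: rsysf Phi \<Delta>
    by unfold_locales (use rs rs2 finW Wdef integ in auto)
  obtain B where M: "M = {\<Sum>b\<in>B. of_int (c b) *\<^sub>R b | c. True}"
    using assms(1) unfolding lattice_def by blast
  obtain G where S: "S = {\<Sum>g\<in>G. of_nat (n g) *\<^sub>R g | n. True}"
    and SM: "S \<subseteq> M" and sat: "\<forall>k::nat. \<forall>m\<in>M. k > 0 \<longrightarrow> of_nat k *\<^sub>R m \<in> S \<longrightarrow> m \<in> S"
    using assms(7) unfolding saturated_affine_semigroup_def by blast
  have ZlM: "R.Zl \<subseteq> M"
  proof
    fix x assume "x \<in> R.Zl"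
    then obtain c where c: "x = (\<Sum>a\<in>\<Delta>. of_int (c a) *\<^sub>R a)" unfolding R.Zl_def by blast
    show "x \<in> M" unfolding c by (rule lat_sum[OF M R.finD]) (use assms(5) in blast)
  qed
  have uM: "u \<in> M" using assms(9) SM by blast
  have uDW: "u \<in> R.DW" using assms(9) SM assms(6) by blast
  define f where "f = Psi W \<Delta> u"
  have fInv: "R.Inv f" unfolding f_def Wdef by (rule R.Psi_Inv[OF uDW])
  have fkeys: "Poly_Mapping.keys f \<subseteq> R.Pp u" unfolding f_def Wdef by (rule R.Psi_keys[OF uDW])
  have keysM: "x \<in> M" if "x \<in> Poly_Mapping.keys f" for x
  proof -
    have "u - x \<in> M" using fkeys that ZlM by (auto simp: R.Pp_def)
    then have "u - (u - x) \<in> M" by (rule lat_diff[OF M uM])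
    then show ?thesis by simp
  qed
  have fw: "Poly_Mapping.keys f \<subseteq> weights \<Delta>" using keysM assms(6) by blast
  have oc: "orb_coeffs W \<Delta> f = (\<lambda>v. if v \<in> R.DW then Poly_Mapping.lookup f v else 0)"
    unfolding Wdef by (rule R.orb_coeffs_eq[OF fInv fw])
  show ?thesis
  proof (intro allI impI)
    fix v assume "orb_coeffs W \<Delta> (Psi W \<Delta> u) v \<noteq> 0"
    then have "Poly_Mapping.lookup f v \<noteq> 0" using oc by (simp add: f_def split: if_splits)
    then have vk: "v \<in> Poly_Mapping.keys f" by (simp add: in_keys_iff)
    have vM: "v \<in> M" using keysM[OF vk] .
    have "v \<in> R.P u" using fkeys vk by (auto simp: R.Pp_def)
    then obtain t where t: "v = (\<Sum>w\<in>W. t w *\<^sub>R w u)" "\<forall>w\<in>W. t w \<in> \<rat> \<and> 0 \<le> t w"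
      unfolding R.P_def Wdef by blast
    obtain k :: nat where k: "k > 0" "\<forall>w\<in>W. real k * t w \<in> \<int>"
      using rat_common_denom[OF finW, of t] t(2) by blast
    define m where "m w = nat \<lfloor>real k * t w\<rfloor>" for w
    have mk: "real (m w) = real k * t w" if "w \<in> W" for w
      unfolding m_def using k(2) t(2) that by (intro nat_floor_Ints) auto
    have "of_nat k *\<^sub>R v = (\<Sum>w\<in>W. (real k * t w) *\<^sub>R w u)"
      unfolding t(1) by (simp add: scaleR_sum_right)
    also have "\<dots> = (\<Sum>w\<in>W. of_nat (m w) *\<^sub>R w u)"
      by (intro sum.cong refl) (simp add: mk)
    also have "\<dots> \<in> S"
      by (rule sg_sum[OF S finW]) (use assms(8,9) in blast)
    finally have "of_nat k *\<^sub>R v \<in> S" .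
    then show "v \<in> S" using sat k(1) vM by blast
  qed
qed

end
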